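(* Let $m_0,\dots,m_{k-1}$ be models and let $D$ be a set of i.i.d. games between them, each game being labelled as belonging to a given task or not; let $D_{\text{task}}\subset D$ be the games belonging to the task and $D_{\neg\text{task}}\subset D$ those not belonging to it. Let $\mathbf{R}_{\text{task}}$, resp. $\mathbf{R}_{\neg\text{task}}$, be the rating vector obtained by fitting the games in $D_{\text{task}}$, resp. $D_{\neg\text{task}}$, with the optimal univariate rating system, i.e. a minimizer over $\mathbb{R}^k$ of the logistic loss $\mathcal{L}(D_{\text{task}},\cdot)$, resp. $\mathcal{L}(D_{\neg\text{task}},\cdot)$. Let $\mathbf{R}'$ be the Polyrating fit on all of $D$ with parameters $R'^{m}_{\neg\text{task}}$ and $\beta^m_1$ for each model $m$, using the formula $R'^m(g)=R'^m_{\neg\text{task}}+\beta^m_1\,[g\in D_{\text{task}}]$ and independent priors $\mathcal{N}(0,\sigma_{\neg\text{task}}^2)$ on each $R'^m_{\neg\text{task}}$ and $\mathcal{N}(0,\sigma_1^2)$ on each $\beta^m_1$; that is, $\mathbf{R}'$ minimizes $$\mathcal{L}(D_{\neg\text{task}},\mathbf{R}'_{\neg\text{task}})+\mathcal{L}(D_{\text{task}},\mathbf{R}'_{\text{task}})+\sum_{m}\frac{(R'^m_{\neg\text{task}})^2}{2\sigma_{\neg\text{task}}^2}+\sum_m\frac{(\beta^m_1)^2}{2\sigma_1^2},$$ where $R'^m_{\text{task}}:=R'^m_{\neg\text{task}}+\beta^m_1$. Then, as $|D_{\neg\text{task}}|\to\infty$ and $|D_{\text{task}}|\to\infty$, $\mathbf{R}_{\text{task}}$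 and $\mathbf{R}'_{\text{task}}$ converge, up to a constant difference, to the same optimal rating $\mathbf{R}^*_{\text{task}}$, provided all optimal ratings are finite. Similarly, $\mathbf{R}_{\neg\text{task}}$ and $\mathbf{R}'_{\neg\text{task}}$ converge, up to a constant difference, to the same optimal rating $\mathbf{R}^*_{\neg\text{task}}$, provided all optimal ratings are finite.
   Context: A game $g$ consists of two distinct models $g_{m_a},g_{m_b}$ and a result $g_r\in\{0,\tfrac12,1\}$ ($1$ if $g_{m_a}$ wins, $0$ if it loses, $\tfrac12$ for a draw). For a set $S$ of games and a rating vector $\mathbf{R}\in\mathbb{R}^k$, the logistic loss is $\mathcal{L}(S,\mathbf{R})=\sum_{g\in S}\big[-g_r\log\operatorname{sig}(\tfrac{R^{g_{m_a}}-R^{g_{m_b}}}{400})-(1-g_r)\log(1-\operatorname{sig}(\tfrac{R^{g_{m_a}}-R^{g_{m_b}}}{400}))\big]$ with $\operatorname{sig}(x)=1/(1+e^{-x})$. The optimal rating $\mathbf{R}^*_{\text{task}}$ (resp. $\mathbf{R}^*_{\neg\text{task}}$) is the minimizer of the expected logistic loss $\mathbf{R}\mapsto\mathbb{E}_g[\mathcal{L}(\{g\},\mathbf{R})]$ where $g$ is drawn from the distribution of games belonging (resp. not belonging) to the task. Ratings are only determined up to an additive constant, since adding a constant to all entries of $\mathbf{R}$ leaves $\mathcal{L}$ unchanged. *)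

theory Defs
  imports "HOL-Probability.Probability"
begin

text \<open>A game: (model a, model b, result of a). Models are elements of a finite type.\<close>
type_synonym 'k game = "'k \<times> 'k \<times> real"

definition valid_games :: "'k game set" where
  "valid_games = {(a, b, r). a \<noteq> b \<and> r \<in> {0, 1/2, 1}}"

definition sig :: "real \<Rightarrow> real" where
  "sig x = 1 / (1 + exp (- x))"

definition game_loss :: "('k \<Rightarrow> real) \<Rightarrow> 'k game \<Rightarrow> real" where
  "game_loss R g = (case g of (a, b, r) \<Rightarrow>
      - r * ln (sig ((R a - R b) / 400)) - (1 - r) * ln (1 - sig ((R a - R b) / 400)))"

definition loss :: "'k game list \<Rightarrow> ('k \<Rightarrow> real) \<Rightarrow> real" where
  "loss S R = sum_list (map (game_loss R) S)"

definition exp_loss :: "'k game pmf \<Rightarrow> ('k \<Rightarrow> real) \<Rightarrow> real" where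
  "exp_loss P R = measure_pmf.expectation P (game_loss R)"

definition is_minimizer :: "('a \<Rightarrow> real) \<Rightarrow> 'a \<Rightarrow> bool" where
  "is_minimizer f x \<longleftrightarrow> (\<forall>y. f x \<le> f y)"

text \<open>Polyrating objective with parameters (R'_{not task}, beta_1);
  Dn = games not in the task, Dt = games in the task.\<close>
definition poly_obj ::
  "real \<Rightarrow> real \<Rightarrow> 'k::finite game list \<Rightarrow> 'k game list \<Rightarrow> ('k \<Rightarrow> real) \<times> ('k \<Rightarrow> real) \<Rightarrow> real" where
  "poly_obj sn s1 Dn Dt p = (case p of (Rn, beta) \<Rightarrow>
      loss Dn Rn + loss Dt (\<lambda>m. Rn m + beta m)
      + (\<Sum>m\<in>UNIV. (Rn m)^2 / (2 * sn^2)) + (\<Sum>m\<in>UNIV. (beta m)^2 / (2 * s1^2)))"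

text \<open>The first n sampled games with label b (True = task, False = not task).\<close>
definition sample :: "(bool \<times> nat \<Rightarrow> 'o \<Rightarrow> 'k game) \<Rightarrow> bool \<Rightarrow> nat \<Rightarrow> 'o \<Rightarrow> 'k game list" where
  "sample X b n \<omega> = map (\<lambda>i. X (b, i) \<omega>) [0..<n]"

definition conv_upto_const :: "('i \<Rightarrow> 'k \<Rightarrow> real) \<Rightarrow> ('k \<Rightarrow> real) \<Rightarrow> 'i filter \<Rightarrow> bool" where
  "conv_upto_const Rs Rstar F \<longleftrightarrow> (\<exists>c. \<forall>m. ((\<lambda>x. Rs x m + c x) \<longlongrightarrow> Rstar m) F)"

end

theory Submission
  imports Defs "HOL-Analysis.Analysis"
begin


definition phi :: "real \<Rightarrow> real" where "phi z = ln (1 + exp z)"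

lemma game_loss_phi:
  "game_loss R (a, b, r) = r * phi (- ((R a - R b) / 400)) + (1 - r) * phi ((R a - R b) / 400)"
proof -
  define x where "x = (R a - R b) / 400"
  have s1: "ln (sig x) = - phi (- x)"
    unfolding sig_def phi_def by (simp add: ln_div)
  have h1: "1 + exp x \<noteq> 0" "1 + exp (-x) \<noteq> 0" by (smt (verit) exp_gt_zero)+
  have "1 - sig x = 1 / (1 + exp x)"
    unfolding sig_def using h1 by (simp add: field_simps exp_minus)
  then have s2: "ln (1 - sig x) = - phi x"
    unfolding phi_def by (simp add: ln_div)
  show ?thesis unfolding game_loss_def using s1 s2 by (simp add: x_def)
qed

lemma phi_convex: "convex_on UNIV phi"
proof (rule convex_on_realI[where f' = "\<lambda>z. exp z / (1 + exp z)"])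
  show "connected (UNIV::real set)" by simp
  fix x show "(phi has_real_derivative exp x / (1 + exp x)) (at x)"
    unfolding phi_def
    by (auto intro!: derivative_eq_intros simp: add_pos_pos)
next
  fix x y :: real assume "x \<le> y"
  have h1: "1 + exp x \<noteq> 0" "1 + exp y \<noteq> 0" by (smt (verit) exp_gt_zero)+
  have "exp x / (1 + exp x) = 1 - 1 / (1 + exp x)" using h1 by (simp add: field_simps)
  moreover have "exp y / (1 + exp y) = 1 - 1 / (1 + exp y)" using h1 by (simp add: field_simps)
  moreover have "1 / (1 + exp y) \<le> 1 / (1 + exp x)"
    using \<open>x \<le> y\<close> by (intro divide_left_mono) (auto simp: add_pos_pos)
  ultimately show "exp x / (1 + exp x) \<le> exp y / (1 + exp y)" by linarith
qed

lemma phi_seg: "0 \<le> t \<Longrightarrow> t \<le> 1 \<Longrightarrow> phi ((1 - t) * x + t * y) \<le> (1 - t) * phi x + t * phi y"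
  using convex_onD[OF phi_convex, of t x y] by simp

definition seg :: "('k \<Rightarrow> real) \<Rightarrow> ('k \<Rightarrow> real) \<Rightarrow> real \<Rightarrow> 'k \<Rightarrow> real" where
  "seg c x t = (\<lambda>m. c m + t * (x m - c m))"

definition cent :: "('k::finite \<Rightarrow> real) \<Rightarrow> bool" where
  "cent R \<longleftrightarrow> sum R UNIV = 0"

definition cen :: "('k::finite \<Rightarrow> real) \<Rightarrow> 'k \<Rightarrow> real" where
  "cen R = (\<lambda>m. R m - sum R UNIV / real CARD('k))"

definition nrm :: "('k::finite \<Rightarrow> real) \<Rightarrow> real" where
  "nrm R = norm (vec_lambda R :: real^'k)"

definition Fw :: "'k game set \<Rightarrow> ('k game \<Rightarrow> real) \<Rightarrow> ('k \<Rightarrow> real) \<Rightarrow> real" where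
  "Fw G w R = (\<Sum>g\<in>G. w g * game_loss R g)"

definition validr :: "'k game set \<Rightarrow> bool" where
  "validr G \<longleftrightarrow> (\<forall>a b r. (a, b, r) \<in> G \<longrightarrow> 0 \<le> r \<and> r \<le> 1)"

lemma game_loss_shift: "game_loss (\<lambda>m. R m + c) g = game_loss R g"
  unfolding game_loss_def by (cases g) auto

lemma game_loss_cen: "game_loss (cen R) g = game_loss R g"
  unfolding cen_def using game_loss_shift[of R "- (sum R UNIV / real CARD('k))" g] by simp

lemma game_loss_seg:
  assumes "0 \<le> r" "r \<le> 1" "0 \<le> t" "t \<le> 1"
  shows "game_loss (seg c x t) (a, b, r) \<le> (1 - t) * game_loss c (a, b, r) + t * game_loss x (a, b, r)"
proof -
  define xc where "xc = (c a - c b) / 400"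
  define xx where "xx = (x a - x b) / 400"
  have e: "(seg c x t a - seg c x t b) / 400 = (1 - t) * xc + t * xx"
    unfolding seg_def xc_def xx_def by (simp add: field_simps)
  have e2: "- ((1 - t) * xc + t * xx) = (1 - t) * (- xc) + t * (- xx)"
    by simp
  have "game_loss (seg c x t) (a, b, r) = r * phi ((1 - t) * (- xc) + t * (- xx)) + (1 - r) * phi ((1 - t) * xc + t * xx)"
    unfolding game_loss_phi e e2 ..
  also have "\<dots> \<le> r * ((1 - t) * phi (- xc) + t * phi (- xx)) + (1 - r) * ((1 - t) * phi xc + t * phi xx)"
    using assms by (intro add_mono mult_left_mono phi_seg) auto
  also have "\<dots> = (1 - t) * game_loss c (a, b, r) + t * game_loss x (a, b, r)"
    unfolding game_loss_phi xc_def[symmetric] xx_def[symmetric] by (simp add: algebra_simps)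
  finally show ?thesis .
qed

lemma Fw_seg:
  assumes "validr G" "\<And>g. g \<in> G \<Longrightarrow> 0 \<le> w g" "0 \<le> t" "t \<le> 1"
  shows "Fw G w (seg c x t) \<le> (1 - t) * Fw G w c + t * Fw G w x"
proof -
  have "Fw G w (seg c x t) \<le> (\<Sum>g\<in>G. w g * ((1 - t) * game_loss c g + t * game_loss x g))"
    unfolding Fw_def
  proof (intro sum_mono mult_left_mono)
    fix g assume g: "g \<in> G"
    obtain a b r where gg: "g = (a, b, r)" by (cases g) auto
    show "game_loss (seg c x t) g \<le> (1 - t) * game_loss c g + t * game_loss x g"
      using assms(1,3,4) g unfolding gg validr_def by (intro game_loss_seg) auto
    show "0 \<le> w g" using assms(2) g .
  qed
  also have "\<dots> = (1 - t) * Fw G w c + t * Fw G w x"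
  proof -
    have "\<And>g. w g * ((1 - t) * game_loss c g + t * game_loss x g) = (1 - t) * (w g * game_loss c g) + t * (w g * game_loss x g)"
      by (simp add: algebra_simps)
    then show ?thesis unfolding Fw_def by (simp only: sum.distrib sum_distrib_left)
  qed
  finally show ?thesis .
qed

lemma loss_seg:
  assumes "\<And>a b r. (a, b, r) \<in> set S \<Longrightarrow> 0 \<le> r \<and> r \<le> 1" "0 \<le> t" "t \<le> 1"
  shows "loss S (seg c x t) \<le> (1 - t) * loss S c + t * loss S x"
  using assms(1)
proof (induction S)
  case Nil
  then show ?case by (simp add: loss_def)
next
  case (Cons g S)
  obtain a b r where gg: "g = (a, b, r)" by (cases g) auto
  have "game_loss (seg c x t) g \<le> (1 - t) * game_loss c g + t * game_loss x g"
    using Cons.prems assms(2,3) unfolding gg by (intro game_loss_seg) auto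
  moreover have "loss S (seg c x t) \<le> (1 - t) * loss S c + t * loss S x"
    using Cons by auto
  ultimately show ?case by (simp add: loss_def algebra_simps)
qed

lemma Fw_shift: "Fw G w (\<lambda>m. R m + c) = Fw G w R"
  unfolding Fw_def game_loss_shift ..

lemma Fw_cen: "Fw G w (cen R) = Fw G w R"
  unfolding Fw_def game_loss_cen ..

lemma loss_shift: "loss S (\<lambda>m. R m + c) = loss S R"
  unfolding loss_def game_loss_shift ..

lemma cent_cen: "cent (cen R)"
  unfolding cent_def cen_def by (simp add: sum_subtractf)

lemma cent_seg: "cent c \<Longrightarrow> cent x \<Longrightarrow> cent (seg c x t)"
  unfolding cent_def seg_def by (simp add: sum.distrib sum_subtractf flip: sum_distrib_left)

lemma vec_nth_lambda: "vec_nth (vec_lambda R) = R"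
  by (rule ext) simp

lemma nrm_vec: "nrm (vec_nth v) = norm v"
  unfolding nrm_def by simp

lemma nrm_comp: "\<bar>R m\<bar> \<le> nrm R"
  unfolding nrm_def using component_le_norm_cart[of "vec_lambda R :: real^'a" m] by simp

lemma nrm_nonneg: "0 \<le> nrm R"
  unfolding nrm_def by simp

lemma nrm_add: "nrm (\<lambda>m. R m + S m) \<le> nrm R + nrm S"
proof -
  have "(\<chi> m. R m + S m) = (vec_lambda R :: real^'a) + vec_lambda S"
    by (simp add: vec_eq_iff)
  then show ?thesis unfolding nrm_def by (simp add: norm_triangle_ineq)
qed

lemma nrm_diff: "nrm (\<lambda>m. R m - S m) \<le> nrm R + nrm S"
proof -
  have "(\<chi> m. R m - S m) = (vec_lambda R :: real^'a) - vec_lambda S"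
    by (simp add: vec_eq_iff)
  then show ?thesis unfolding nrm_def by (simp add: norm_triangle_ineq4)
qed

lemma nrm_scale: "nrm (\<lambda>m. t * R m) = \<bar>t\<bar> * nrm R"
proof -
  have "(\<chi> m. t * R m) = t *\<^sub>R (vec_lambda R :: real^'a)"
    by (simp add: vec_eq_iff)
  then show ?thesis unfolding nrm_def by simp
qed

lemma nrm_sq: "(nrm R)\<^sup>2 = (\<Sum>m\<in>UNIV. (R m)\<^sup>2)"
  unfolding nrm_def norm_vec_def L2_set_def by (simp add: sum_nonneg)

lemma nrm_seg: "0 \<le> t \<Longrightarrow> nrm (\<lambda>m. seg c x t m - c m) = t * nrm (\<lambda>m. x m - c m)"
  unfolding seg_def using nrm_scale[of t "\<lambda>m. x m - c m"] by simp

lemma nrm_zero[simp]: "nrm (\<lambda>m. 0) = 0"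
proof -
  have "(\<chi> m. (0::real)) = (0::real^'a)" by (simp add: vec_eq_iff)
  then show ?thesis unfolding nrm_def by simp
qed

lemma nrm_eq0: "nrm R = 0 \<Longrightarrow> R m = 0"
  using nrm_comp[of R m] by simp

lemma continuous_game_loss: "continuous_on UNIV (\<lambda>v::real^'k. game_loss (vec_nth v) g)"
proof -
  obtain a b r where gg: "g = (a, b, r)" by (cases g) auto
  have p: "\<And>z. 1 + exp z \<noteq> (0::real)" by (smt (verit) exp_gt_zero)
  show ?thesis unfolding gg game_loss_phi phi_def
    by (intro continuous_intros) (auto simp: p)
qed

lemma continuous_Fw: "continuous_on UNIV (\<lambda>v::real^'k. Fw G w (vec_nth v))"
  unfolding Fw_def by (intro continuous_intros continuous_game_loss)

lemma attains_min:
  fixes f :: "('k::finite \<Rightarrow> real) \<Rightarrow> real"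
  assumes "continuous_on UNIV (\<lambda>v::real^'k. f (vec_nth v))"
    and "compact {v::real^'k. P (vec_nth v)}" and "P R1"
  shows "\<exists>R. P R \<and> (\<forall>S. P S \<longrightarrow> f R \<le> f S)"
proof -
  have "{v::real^'k. P (vec_nth v)} \<noteq> {}" using assms(3) by (auto intro!: exI[of _ "vec_lambda R1"] simp: vec_nth_lambda)
  from continuous_attains_inf[OF assms(2) this continuous_on_subset[OF assms(1)]]
  obtain x where x: "P (vec_nth x)" "\<And>y. P (vec_nth y) \<Longrightarrow> f (vec_nth x) \<le> f (vec_nth y)" by auto
  show ?thesis
  proof (intro exI[of _ "vec_nth x"] conjI allI impI)
    fix S assume "P S" then show "f (vec_nth x) \<le> f S" using x(2)[of "vec_lambda S"] by (simp add: vec_nth_lambda)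
  qed (use x in auto)
qed

lemma closed_cent: "closed {v::real^'k::finite. cent (vec_nth v)}"
  unfolding cent_def by (intro closed_Collect_eq continuous_intros)

lemma nrm_dist: "nrm (\<lambda>m. vec_nth v m - R0 m) = dist v (vec_lambda R0)"
proof -
  have "(\<chi> m. vec_nth v m - R0 m) = v - vec_lambda R0" by (simp add: vec_eq_iff)
  then show ?thesis unfolding nrm_def by (simp add: dist_norm)
qed

lemma compact_ball_cent: "compact {v::real^'k::finite. cent (vec_nth v) \<and> nrm (\<lambda>m. vec_nth v m - R0 m) \<le> r}"
proof -
  have "{v::real^'k. cent (vec_nth v) \<and> nrm (\<lambda>m. vec_nth v m - R0 m) \<le> r}
      = {v. cent (vec_nth v)} \<inter> cball (vec_lambda R0) r"
    by (auto simp: nrm_dist dist_commute)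
  then show ?thesis using closed_Int_compact[OF closed_cent compact_cball] by simp
qed

lemma compact_sphere_cent: "compact {v::real^'k::finite. cent (vec_nth v) \<and> nrm (\<lambda>m. vec_nth v m - R0 m) = r}"
proof -
  have "{v::real^'k. cent (vec_nth v) \<and> nrm (\<lambda>m. vec_nth v m - R0 m) = r}
      = {v. cent (vec_nth v)} \<inter> sphere (vec_lambda R0) r"
    by (auto simp: nrm_dist dist_commute)
  then show ?thesis using closed_Int_compact[OF closed_cent compact_sphere] by simp
qed


lemma seg_sphere:
  assumes "cent c" "cent y" "0 < \<rho>" "\<rho> \<le> nrm (\<lambda>m. y m - c m)"
  defines "t \<equiv> \<rho> / nrm (\<lambda>m. y m - c m)"
  shows "0 < t" "t \<le> 1" "cent (seg c y t)" "nrm (\<lambda>m. seg c y t m - c m) = \<rho>"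
proof -
  have D: "nrm (\<lambda>m. y m - c m) > 0" using assms by linarith
  show "0 < t" unfolding t_def using D assms by simp
  show "t \<le> 1" unfolding t_def using D assms by simp
  show "cent (seg c y t)" using assms cent_seg by blast
  show "nrm (\<lambda>m. seg c y t m - c m) = \<rho>"
    using nrm_seg[of t c y] \<open>0 < t\<close> D unfolding t_def by simp
qed

lemma cent_shift_eq:
  assumes "cent R" "cent S" "\<And>m. R m = S m + c"
  shows "R = S"
proof -
  have "sum R UNIV = sum S UNIV + real CARD('a) * c"
    using assms(3) by (simp add: sum.distrib)
  then have "c = 0" using assms(1,2) unfolding cent_def by simp
  then show ?thesis using assms(3) by auto
qed

lemma gap_limit:
  fixes F :: "('k::finite \<Rightarrow> real) \<Rightarrow> real"
  assumes cont: "continuous_on UNIV (\<lambda>v::real^'k. F (vec_nth v))"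
    and conv: "\<And>c x t. 0 \<le> t \<Longrightarrow> t \<le> 1 \<Longrightarrow> F (seg c x t) \<le> (1 - t) * F c + t * F x"
    and min: "\<And>R. F R0 \<le> F R" and c0: "cent R0"
    and uniq: "\<And>R. (\<forall>S. F R \<le> F S) \<Longrightarrow> \<exists>c. \<forall>m. R m = R0 m + c"
    and rho: "\<rho> > 0"
  shows "\<exists>\<delta>>0. \<forall>y. cent y \<and> \<rho> \<le> nrm (\<lambda>m. y m - R0 m) \<longrightarrow> F R0 + \<delta> \<le> F y"
proof (cases "\<exists>S. cent S \<and> nrm (\<lambda>m. S m - R0 m) = \<rho>")
  case False
  show ?thesis
  proof (intro exI[of _ 1] conjI allI impI)
    fix y assume y: "cent y \<and> \<rho> \<le> nrm (\<lambda>m. y m - R0 m)"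
    then have False using seg_sphere[OF c0 _ rho, of y] False by blast
    then show "F R0 + 1 \<le> F y" ..
  qed simp
next
  case True
  then obtain S1 where S1: "cent S1 \<and> nrm (\<lambda>m. S1 m - R0 m) = \<rho>" by blast
  obtain z0 where z0: "cent z0 \<and> nrm (\<lambda>m. z0 m - R0 m) = \<rho>"
    and z0min: "\<And>S. cent S \<and> nrm (\<lambda>m. S m - R0 m) = \<rho> \<Longrightarrow> F z0 \<le> F S"
    using attains_min[OF cont compact_sphere_cent S1] by blast
  define \<delta> where "\<delta> = F z0 - F R0"
  have "\<delta> > 0"
  proof (rule ccontr)
    assume "\<not> \<delta> > 0"
    then have "F z0 \<le> F R0" unfolding \<delta>_def by simp
    then have "\<forall>S. F z0 \<le> F S" using min order_trans by blast
    then obtain c where "\<And>m. z0 m = R0 m + c" using uniq by blast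
    then have "z0 = R0" using cent_shift_eq z0 c0 by blast
    then show False using z0 rho by simp
  qed
  show ?thesis
  proof (intro exI[of _ \<delta>] conjI allI impI)
    fix y assume y: "cent y \<and> \<rho> \<le> nrm (\<lambda>m. y m - R0 m)"
    define t where "t = \<rho> / nrm (\<lambda>m. y m - R0 m)"
    have t: "0 < t" "t \<le> 1" "cent (seg R0 y t)" "nrm (\<lambda>m. seg R0 y t m - R0 m) = \<rho>"
      using seg_sphere[OF c0 _ rho, of y] y unfolding t_def by auto
    have "F R0 + \<delta> \<le> F (seg R0 y t)" using z0min[of "seg R0 y t"] t unfolding \<delta>_def by simp
    also have "\<dots> \<le> (1 - t) * F R0 + t * F y" using conv t by simp
    finally have "\<delta> \<le> t * (F y - F R0)" by (simp add: algebra_simps)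
    moreover have "t * (F y - F R0) \<le> F y - F R0"
    proof -
      have "0 < t * (F y - F R0)" using \<open>\<delta> > 0\<close> \<open>\<delta> \<le> t * (F y - F R0)\<close> by linarith
      then have "0 \<le> F y - F R0" using t(1) by (simp add: zero_less_mult_iff)
      then show ?thesis using t(1,2) by (simp add: mult_left_le_one_le)
    qed
    ultimately show "F R0 + \<delta> \<le> F y" by simp
  qed (use \<open>\<delta> > 0\<close> in simp)
qed

lemma uniform_conv:
  fixes w :: "nat \<Rightarrow> 'k::finite game \<Rightarrow> real"
  assumes G: "finite G" and conv: "\<And>g. g \<in> G \<Longrightarrow> (\<lambda>N. w N g) \<longlonglongrightarrow> p g"
    and c0: "cent R0" and r: "0 \<le> r" and eta: "\<eta> > 0"
  shows "eventually (\<lambda>N. \<forall>R. cent R \<and> nrm (\<lambda>m. R m - R0 m) \<le> r \<longrightarrow>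
             \<bar>Fw G (w N) R - Fw G p R\<bar> \<le> \<eta>) sequentially"
proof -
  define h where "h R = - (\<Sum>g\<in>G. \<bar>game_loss R g\<bar>)" for R :: "'k \<Rightarrow> real"
  have ch: "continuous_on UNIV (\<lambda>v::real^'k. h (vec_nth v))"
    unfolding h_def by (intro continuous_intros continuous_game_loss)
  have "cent R0 \<and> nrm (\<lambda>m. R0 m - R0 m) \<le> r" using c0 r by simp
  from attains_min[OF ch compact_ball_cent this]
  obtain Rb where Rb: "\<And>S. cent S \<and> nrm (\<lambda>m. S m - R0 m) \<le> r \<Longrightarrow> h Rb \<le> h S" by blast
  define B where "B = - h Rb"
  have B: "\<bar>game_loss R g\<bar> \<le> B" if "cent R \<and> nrm (\<lambda>m. R m - R0 m) \<le> r" "g \<in> G" for R g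
  proof -
    have "\<bar>game_loss R g\<bar> \<le> (\<Sum>g\<in>G. \<bar>game_loss R g\<bar>)"
      using G that(2) by (intro member_le_sum) auto
    also have "\<dots> \<le> B" using Rb[OF that(1)] unfolding B_def h_def by simp
    finally show ?thesis .
  qed
  have "(\<lambda>N. (\<Sum>g\<in>G. \<bar>w N g - p g\<bar>) * B) \<longlonglongrightarrow> (\<Sum>g\<in>G. \<bar>p g - p g\<bar>) * B"
    by (intro tendsto_intros conv)
  then have "(\<lambda>N. (\<Sum>g\<in>G. \<bar>w N g - p g\<bar>) * B) \<longlonglongrightarrow> 0" by simp
  then have ev: "eventually (\<lambda>N. (\<Sum>g\<in>G. \<bar>w N g - p g\<bar>) * B < \<eta>) sequentially"
    using eta by (rule order_tendstoD)
  show ?thesis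
  proof (rule eventually_mono[OF ev], intro allI impI)
    fix N R assume N: "(\<Sum>g\<in>G. \<bar>w N g - p g\<bar>) * B < \<eta>" and R: "cent R \<and> nrm (\<lambda>m. R m - R0 m) \<le> r"
    have "\<bar>Fw G (w N) R - Fw G p R\<bar> = \<bar>\<Sum>g\<in>G. (w N g - p g) * game_loss R g\<bar>"
      unfolding Fw_def by (simp add: sum_subtractf algebra_simps)
    also have "\<dots> \<le> (\<Sum>g\<in>G. \<bar>(w N g - p g) * game_loss R g\<bar>)" by (rule sum_abs)
    also have "\<dots> \<le> (\<Sum>g\<in>G. \<bar>w N g - p g\<bar> * B)"
      unfolding abs_mult by (intro sum_mono mult_left_mono B R) auto
    also have "\<dots> < \<eta>" using N by (simp add: sum_distrib_right)
    finally show "\<bar>Fw G (w N) R - Fw G p R\<bar> \<le> \<eta>" by simp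
  qed
qed


locale fit =
  fixes G :: "'k::finite game set" and w :: "nat \<Rightarrow> 'k game \<Rightarrow> real" and p :: "'k game \<Rightarrow> real"
    and R0 :: "'k \<Rightarrow> real"
  assumes G: "finite G" and vG: "validr G"
    and wpos: "\<And>N g. g \<in> G \<Longrightarrow> 0 \<le> w N g"
    and wconv: "\<And>g. g \<in> G \<Longrightarrow> (\<lambda>N. w N g) \<longlonglongrightarrow> p g"
    and ppos: "\<And>g. g \<in> G \<Longrightarrow> 0 \<le> p g"
    and min: "\<And>R. Fw G p R0 \<le> Fw G p R" and c0: "cent R0"
    and uniq: "\<And>R. (\<forall>S. Fw G p R \<le> Fw G p S) \<Longrightarrow> \<exists>c. \<forall>m. R m = R0 m + c"
begin

lemma S1gap:
  assumes rho: "\<rho> > 0"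
  shows "\<exists>\<delta>>0. eventually (\<lambda>N. \<forall>y. cent y \<and> \<rho> \<le> nrm (\<lambda>m. y m - R0 m) \<and> nrm (\<lambda>m. y m - R0 m) \<le> 2
            \<longrightarrow> Fw G (w N) R0 + \<delta> \<le> Fw G (w N) y) sequentially"
proof -
  obtain \<delta>0 where d0: "\<delta>0 > 0" and gap: "\<And>y. cent y \<and> \<rho> \<le> nrm (\<lambda>m. y m - R0 m) \<Longrightarrow> Fw G p R0 + \<delta>0 \<le> Fw G p y"
    using gap_limit[OF continuous_Fw, of G p, OF Fw_seg[OF vG ppos] min c0 uniq rho] by blast
  have ev: "eventually (\<lambda>N. \<forall>R. cent R \<and> nrm (\<lambda>m. R m - R0 m) \<le> 2 \<longrightarrow>
             \<bar>Fw G (w N) R - Fw G p R\<bar> \<le> \<delta>0 / 4) sequentially"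
    using d0 by (intro uniform_conv[OF G wconv c0]) auto
  show ?thesis
  proof (intro exI[of _ "\<delta>0 / 2"] conjI)
    show "eventually (\<lambda>N. \<forall>y. cent y \<and> \<rho> \<le> nrm (\<lambda>m. y m - R0 m) \<and> nrm (\<lambda>m. y m - R0 m) \<le> 2
            \<longrightarrow> Fw G (w N) R0 + \<delta>0 / 2 \<le> Fw G (w N) y) sequentially"
    proof (rule eventually_mono[OF ev], intro allI impI)
      fix N y assume U: "\<forall>R. cent R \<and> nrm (\<lambda>m. R m - R0 m) \<le> 2 \<longrightarrow> \<bar>Fw G (w N) R - Fw G p R\<bar> \<le> \<delta>0 / 4"
        and y: "cent y \<and> \<rho> \<le> nrm (\<lambda>m. y m - R0 m) \<and> nrm (\<lambda>m. y m - R0 m) \<le> 2"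
      have "\<bar>Fw G (w N) y - Fw G p y\<bar> \<le> \<delta>0 / 4" using U y by blast
      moreover have "\<bar>Fw G (w N) R0 - Fw G p R0\<bar> \<le> \<delta>0 / 4" using U c0 by simp
      moreover have "Fw G p R0 + \<delta>0 \<le> Fw G p y" using gap y by blast
      ultimately show "Fw G (w N) R0 + \<delta>0 / 2 \<le> Fw G (w N) y" by linarith
    qed
  qed (use d0 in simp)
qed

lemma claimA:
  assumes eps: "0 < \<epsilon>" and d: "0 < \<delta>"
    and P: "\<forall>y. cent y \<and> \<epsilon> \<le> nrm (\<lambda>m. y m - R0 m) \<and> nrm (\<lambda>m. y m - R0 m) \<le> 2
            \<longrightarrow> Fw G (w N) R0 + \<delta> \<le> Fw G (w N) y"
    and e2: "\<epsilon> \<le> 2"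
    and x: "cent x" "\<epsilon> \<le> nrm (\<lambda>m. x m - R0 m)"
  shows "Fw G (w N) R0 < Fw G (w N) x"
proof -
  define t where "t = \<epsilon> / nrm (\<lambda>m. x m - R0 m)"
  have t: "0 < t" "t \<le> 1" "cent (seg R0 x t)" "nrm (\<lambda>m. seg R0 x t m - R0 m) = \<epsilon>"
    using seg_sphere[OF c0 x(1) eps x(2)] unfolding t_def by auto
  have "Fw G (w N) R0 + \<delta> \<le> Fw G (w N) (seg R0 x t)" using P t e2 by auto
  also have "\<dots> \<le> (1 - t) * Fw G (w N) R0 + t * Fw G (w N) x"
    using Fw_seg[OF vG wpos] t by simp
  finally have "\<delta> \<le> t * (Fw G (w N) x - Fw G (w N) R0)" by (simp add: algebra_simps)
  then have "0 < t * (Fw G (w N) x - Fw G (w N) R0)" using d by linarith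
  then show ?thesis using t(1) by (simp add: zero_less_mult_iff)
qed

lemma S1:
  assumes eps: "0 < \<epsilon>" "\<epsilon> \<le> 2"
  shows "eventually (\<lambda>N. (\<exists>R. is_minimizer (Fw G (w N)) R) \<and>
      (\<forall>R. is_minimizer (Fw G (w N)) R \<longrightarrow> nrm (\<lambda>m. cen R m - R0 m) < \<epsilon>)) sequentially"
proof -
  obtain \<delta> where d: "\<delta> > 0" and ev: "eventually (\<lambda>N. \<forall>y. cent y \<and> \<epsilon> \<le> nrm (\<lambda>m. y m - R0 m) \<and> nrm (\<lambda>m. y m - R0 m) \<le> 2
            \<longrightarrow> Fw G (w N) R0 + \<delta> \<le> Fw G (w N) y) sequentially"
    using S1gap[OF eps(1)] by blast
  show ?thesis
  proof (rule eventually_mono[OF ev], intro conjI allI impI)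
    fix N assume P: "\<forall>y. cent y \<and> \<epsilon> \<le> nrm (\<lambda>m. y m - R0 m) \<and> nrm (\<lambda>m. y m - R0 m) \<le> 2
            \<longrightarrow> Fw G (w N) R0 + \<delta> \<le> Fw G (w N) y"
    note A = claimA[OF eps(1) d P eps(2)]
    have "cent R0 \<and> nrm (\<lambda>m. R0 m - R0 m) \<le> \<epsilon>" using c0 eps by simp
    from attains_min[OF continuous_Fw compact_ball_cent this]
    obtain M where M: "cent M \<and> nrm (\<lambda>m. M m - R0 m) \<le> \<epsilon>"
      and Mmin: "\<And>S. cent S \<and> nrm (\<lambda>m. S m - R0 m) \<le> \<epsilon> \<Longrightarrow> Fw G (w N) M \<le> Fw G (w N) S" by blast
    have "Fw G (w N) M \<le> Fw G (w N) S" for S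
    proof (cases "nrm (\<lambda>m. cen S m - R0 m) \<le> \<epsilon>")
      case True
      then show ?thesis using Mmin[of "cen S"] cent_cen[of S] by (simp add: Fw_cen)
    next
      case False
      then have "Fw G (w N) R0 < Fw G (w N) (cen S)" using A[of "cen S"] cent_cen[of S] by simp
      moreover have "Fw G (w N) M \<le> Fw G (w N) R0" using Mmin[of R0] c0 eps by simp
      ultimately show ?thesis by (simp add: Fw_cen)
    qed
    then show "\<exists>R. is_minimizer (Fw G (w N)) R" unfolding is_minimizer_def by blast
  next
    fix N R assume P: "\<forall>y. cent y \<and> \<epsilon> \<le> nrm (\<lambda>m. y m - R0 m) \<and> nrm (\<lambda>m. y m - R0 m) \<le> 2
            \<longrightarrow> Fw G (w N) R0 + \<delta> \<le> Fw G (w N) y"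
      and R: "is_minimizer (Fw G (w N)) R"
    note A = claimA[OF eps(1) d P eps(2)]
    show "nrm (\<lambda>m. cen R m - R0 m) < \<epsilon>"
    proof (rule ccontr)
      assume "\<not> ?thesis"
      then have "Fw G (w N) R0 < Fw G (w N) (cen R)" using A[of "cen R"] cent_cen[of R] by simp
      moreover have "Fw G (w N) R \<le> Fw G (w N) R0" using R unfolding is_minimizer_def by blast
      ultimately show False by (simp add: Fw_cen)
    qed
  qed
qed

end



lemma nrm_tri: "nrm (\<lambda>m. a m - c m) \<le> nrm (\<lambda>m. a m - b m) + nrm (\<lambda>m. b m - c m)"
proof -
  have "(\<lambda>m. a m - c m) = (\<lambda>m. (a m - b m) + (b m - c m))" by auto
  then show ?thesis using nrm_add[of "\<lambda>m. a m - b m" "\<lambda>m. b m - c m"] by simp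
qed

lemma nrm_sub0: "nrm R \<le> nrm (\<lambda>m. R m - S m) + nrm S"
  using nrm_tri[of R "\<lambda>m. 0" S] by simp

lemma nrm_commute: "nrm (\<lambda>m. a m - b m) = nrm (\<lambda>m. b m - a m)"
  using nrm_scale[of "-1" "\<lambda>m. a m - b m"] by simp

lemma sq_seg: "0 \<le> t \<Longrightarrow> t \<le> 1 \<Longrightarrow> (c + t * (x - c))\<^sup>2 \<le> (1 - t) * c\<^sup>2 + t * (x::real)\<^sup>2"
proof -
  assume t: "0 \<le> t" "t \<le> 1"
  have "(1 - t) * c\<^sup>2 + t * x\<^sup>2 - (c + t * (x - c))\<^sup>2 = t * (1 - t) * (x - c)\<^sup>2"
    by (simp add: power2_eq_square algebra_simps)
  moreover have "0 \<le> t * (1 - t) * (x - c)\<^sup>2" using t by simp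
  ultimately show ?thesis by linarith
qed

definition qpri :: "real \<Rightarrow> real \<Rightarrow> ('k::finite \<Rightarrow> real) \<Rightarrow> ('k \<Rightarrow> real) \<Rightarrow> real" where
  "qpri sn s1 R B = (\<Sum>m\<in>UNIV. (R m)^2 / (2 * sn^2)) + (\<Sum>m\<in>UNIV. (B m)^2 / (2 * s1^2))"

lemma qpri_nonneg: "0 \<le> qpri sn s1 R B"
  unfolding qpri_def by (intro add_nonneg_nonneg sum_nonneg) auto

lemma poly_obj_eq: "poly_obj sn s1 Dn Dt (R, B) = loss Dn R + loss Dt (\<lambda>m. R m + B m) + qpri sn s1 R B"
  unfolding poly_obj_def qpri_def by simp

lemma qpri_seg:
  assumes "0 \<le> t" "t \<le> 1"
  shows "qpri sn s1 (seg Rc Rx t) (seg Bc Bx t) \<le> (1 - t) * qpri sn s1 Rc Bc + t * qpri sn s1 Rx Bx"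
proof -
  have a: "(seg c x t m)\<^sup>2 / (2 * s^2) \<le> (1 - t) * ((c m)\<^sup>2 / (2 * s^2)) + t * ((x m)\<^sup>2 / (2 * s^2))"
    for c x :: "'a \<Rightarrow> real" and m and s :: real
  proof -
    have "(seg c x t m)\<^sup>2 / (2 * s^2) \<le> ((1 - t) * (c m)\<^sup>2 + t * (x m)\<^sup>2) / (2 * s^2)"
      unfolding seg_def using sq_seg[OF assms] by (intro divide_right_mono) auto
    then show ?thesis by (simp add: add_divide_distrib)
  qed
  have b: "(\<Sum>m\<in>UNIV. (seg c x t m)\<^sup>2 / (2 * s^2)) \<le> (1 - t) * (\<Sum>m\<in>UNIV. (c m)\<^sup>2 / (2 * s^2)) + t * (\<Sum>m\<in>UNIV. (x m)\<^sup>2 / (2 * s^2))"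
    for c x :: "'a \<Rightarrow> real" and s :: real
    by (simp only: sum_distrib_left flip: sum.distrib) (intro sum_mono a)
  show ?thesis unfolding qpri_def using b[of Rc Rx sn] b[of Bc Bx s1] by (simp add: algebra_simps)
qed

lemma seg_add: "(\<lambda>m. seg Rc Rx t m + seg Bc Bx t m) = seg (\<lambda>m. Rc m + Bc m) (\<lambda>m. Rx m + Bx m) t"
  unfolding seg_def by (auto simp: algebra_simps)

lemma poly_seg:
  assumes "\<And>a b r. (a, b, r) \<in> set Dn \<Longrightarrow> 0 \<le> r \<and> r \<le> 1"
    and "\<And>a b r. (a, b, r) \<in> set Dt \<Longrightarrow> 0 \<le> r \<and> r \<le> 1"
    and t: "0 \<le> t" "t \<le> 1"
  shows "poly_obj sn s1 Dn Dt (seg Rc Rx t, seg Bc Bx t)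
     \<le> (1 - t) * poly_obj sn s1 Dn Dt (Rc, Bc) + t * poly_obj sn s1 Dn Dt (Rx, Bx)"
proof -
  have 1: "loss Dn (seg Rc Rx t) \<le> (1 - t) * loss Dn Rc + t * loss Dn Rx"
    by (rule loss_seg) (use assms in auto)
  have 2: "loss Dt (seg (\<lambda>m. Rc m + Bc m) (\<lambda>m. Rx m + Bx m) t) \<le> (1 - t) * loss Dt (\<lambda>m. Rc m + Bc m) + t * loss Dt (\<lambda>m. Rx m + Bx m)"
    by (rule loss_seg) (use assms in auto)
  show ?thesis unfolding poly_obj_eq seg_add
    using 1 2 qpri_seg[OF t, of sn s1 Rc Rx Bc Bx] by (simp add: algebra_simps)
qed

lemma sum_sq_shift:
  "(\<Sum>m\<in>UNIV. (f m - c)\<^sup>2) = (\<Sum>m\<in>UNIV. (f m)\<^sup>2) - 2 * c * sum f UNIV + real CARD('k) * c\<^sup>2"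
  for f :: "'k::finite \<Rightarrow> real"
proof -
  have "(\<Sum>m\<in>UNIV. (f m - c)\<^sup>2) = (\<Sum>m\<in>UNIV. (f m)\<^sup>2 - 2 * c * f m + c\<^sup>2)"
    by (simp add: power2_diff algebra_simps)
  also have "\<dots> = (\<Sum>m\<in>UNIV. (f m)\<^sup>2) - 2 * c * sum f UNIV + real CARD('k) * c\<^sup>2"
    by (simp add: sum.distrib sum_subtractf sum_distrib_left)
  finally show ?thesis .
qed

lemma poly_cent:
  assumes sn: "sn > 0" and s1: "s1 > 0"
    and mn: "is_minimizer (poly_obj sn s1 Dn Dt) (Rp, Bp)"
  shows "cent Rp" "cent (\<lambda>m. Rp m + Bp m)"
proof -
  define k where "k = real CARD('a)"
  have k: "k > 0" unfolding k_def by simp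
  define \<alpha> where "\<alpha> = sum Rp UNIV / k"
  define \<gamma> where "\<gamma> = sum (\<lambda>m. Rp m + Bp m) UNIV / k"
  have sR: "sum Rp UNIV = k * \<alpha>" unfolding \<alpha>_def using k by simp
  have sT: "sum (\<lambda>m. Rp m + Bp m) UNIV = k * \<gamma>" unfolding \<gamma>_def using k by simp
  have sB: "sum Bp UNIV = k * \<gamma> - k * \<alpha>" using sR sT by (simp add: sum.distrib)
  define R' where "R' = (\<lambda>m. Rp m - \<alpha>)"
  define B' where "B' = (\<lambda>m. Bp m - (\<gamma> - \<alpha>))"
  have T': "(\<lambda>m. R' m + B' m) = (\<lambda>m. (Rp m + Bp m) + (- \<gamma>))" unfolding R'_def B'_def by auto
  have l1: "loss Dn R' = loss Dn Rp" unfolding R'_def using loss_shift[of Dn Rp "-\<alpha>"] by simp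
  have l2: "loss Dt (\<lambda>m. R' m + B' m) = loss Dt (\<lambda>m. Rp m + Bp m)" unfolding T' by (rule loss_shift)
  have q1: "(\<Sum>m\<in>UNIV. (R' m)\<^sup>2) = (\<Sum>m\<in>UNIV. (Rp m)\<^sup>2) - k * \<alpha>\<^sup>2"
    unfolding R'_def sum_sq_shift sR k_def[symmetric] by (simp add: power2_eq_square)
  have q2: "(\<Sum>m\<in>UNIV. (B' m)\<^sup>2) = (\<Sum>m\<in>UNIV. (Bp m)\<^sup>2) - k * (\<gamma> - \<alpha>)\<^sup>2"
    unfolding B'_def sum_sq_shift sB k_def[symmetric] by (simp add: power2_eq_square algebra_simps)
  have "poly_obj sn s1 Dn Dt (Rp, Bp) \<le> poly_obj sn s1 Dn Dt (R', B')"
    using mn unfolding is_minimizer_def by blast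
  then have "(\<Sum>m\<in>UNIV. (Rp m)\<^sup>2) / (2 * sn^2) + (\<Sum>m\<in>UNIV. (Bp m)\<^sup>2) / (2 * s1^2)
     \<le> (\<Sum>m\<in>UNIV. (R' m)\<^sup>2) / (2 * sn^2) + (\<Sum>m\<in>UNIV. (B' m)\<^sup>2) / (2 * s1^2)"
    unfolding poly_obj_eq qpri_def l1 l2 by (simp add: sum_divide_distrib)
  then have "k * \<alpha>\<^sup>2 / (2 * sn^2) + k * (\<gamma> - \<alpha>)\<^sup>2 / (2 * s1^2) \<le> 0"
    unfolding q1 q2 by (simp add: diff_divide_distrib)
  moreover have "0 \<le> k * \<alpha>\<^sup>2 / (2 * sn^2)" "0 \<le> k * (\<gamma> - \<alpha>)\<^sup>2 / (2 * s1^2)" using k by auto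
  ultimately have "k * \<alpha>\<^sup>2 / (2 * sn^2) = 0" "k * (\<gamma> - \<alpha>)\<^sup>2 / (2 * s1^2) = 0" by linarith+
  then have "\<alpha> = 0" "\<gamma> = \<alpha>" using k sn s1 by auto
  then show "cent Rp" "cent (\<lambda>m. Rp m + Bp m)" unfolding cent_def using sR sT by auto
qed


lemma qpri_bound:
  assumes "nrm (\<lambda>m. u m - R0 m) \<le> 1" "nrm (\<lambda>m. v m - T0 m) \<le> 1"
  shows "qpri sn s1 u (\<lambda>m. v m - u m) \<le> (nrm R0 + 1)\<^sup>2 / (2 * sn^2) + (nrm R0 + nrm T0 + 2)\<^sup>2 / (2 * s1^2)"
proof -
  have nu: "nrm u \<le> nrm R0 + 1" using nrm_sub0[of u R0] assms(1) by linarith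
  have nv: "nrm v \<le> nrm T0 + 1" using nrm_sub0[of v T0] assms(2) by linarith
  have nvu: "nrm (\<lambda>m. v m - u m) \<le> nrm R0 + nrm T0 + 2" using nrm_diff[of v u] nu nv by linarith
  have e: "qpri sn s1 u (\<lambda>m. v m - u m) = (nrm u)\<^sup>2 / (2 * sn^2) + (nrm (\<lambda>m. v m - u m))\<^sup>2 / (2 * s1^2)"
    unfolding qpri_def nrm_sq by (simp add: sum_divide_distrib)
  have "(nrm u)\<^sup>2 \<le> (nrm R0 + 1)\<^sup>2" using nu nrm_nonneg by (intro power_mono) auto
  moreover have "(nrm (\<lambda>m. v m - u m))\<^sup>2 \<le> (nrm R0 + nrm T0 + 2)\<^sup>2" using nvu nrm_nonneg by (intro power_mono) auto
  ultimately show ?thesis unfolding e by (intro add_mono divide_right_mono) auto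
qed

lemma ev_seq_obtain:
  assumes "eventually P sequentially"
  obtains M where "\<And>N. N \<ge> M \<Longrightarrow> P N"
  using assms unfolding eventually_sequentially by blast

lemma S2:
  assumes Fn: "fit G wn pn R0" and Ft: "fit G wt pt T0"
    and sn: "sn > 0" and s1: "s1 > 0"
    and LNk: "\<And>N R. loss (LNk N) R = real N * Fw G (wn N) R" and LNs: "\<And>N. set (LNk N) \<subseteq> G"
    and LTk: "\<And>n R. loss (LTk n) R = real n * Fw G (wt n) R" and LTs: "\<And>n. set (LTk n) \<subseteq> G"
    and eps: "0 < \<epsilon>" "\<epsilon> \<le> 1"
  shows "eventually (\<lambda>(n, N). \<forall>Rp Bp. is_minimizer (poly_obj sn s1 (LNk N) (LTk n)) (Rp, Bp) \<longrightarrow>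
        nrm (\<lambda>m. Rp m - R0 m) < 2 * \<epsilon> \<and> nrm (\<lambda>m. Rp m + Bp m - T0 m) < 2 * \<epsilon>) (sequentially \<times>\<^sub>F sequentially)"
proof -
  define e2 where "e2 = \<epsilon> / 2"
  have e2: "0 < e2" "e2 \<le> 2" using eps unfolding e2_def by auto
  have vG: "validr G" using Fn unfolding fit_def by blast
  obtain M1 where M1: "\<And>N. N \<ge> M1 \<Longrightarrow> (\<exists>R. is_minimizer (Fw G (wn N)) R) \<and>
      (\<forall>R. is_minimizer (Fw G (wn N)) R \<longrightarrow> nrm (\<lambda>m. cen R m - R0 m) < e2)"
    using fit.S1[OF Fn e2] ev_seq_obtain by blast
  obtain M2 where M2: "\<And>n. n \<ge> M2 \<Longrightarrow> (\<exists>R. is_minimizer (Fw G (wt n)) R) \<and>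
      (\<forall>R. is_minimizer (Fw G (wt n)) R \<longrightarrow> nrm (\<lambda>m. cen R m - T0 m) < e2)"
    using fit.S1[OF Ft e2] ev_seq_obtain by blast
  obtain \<delta>n where dn: "\<delta>n > 0" and evn: "eventually (\<lambda>N. \<forall>y. cent y \<and> e2 \<le> nrm (\<lambda>m. y m - R0 m) \<and> nrm (\<lambda>m. y m - R0 m) \<le> 2
            \<longrightarrow> Fw G (wn N) R0 + \<delta>n \<le> Fw G (wn N) y) sequentially"
    using fit.S1gap[OF Fn e2(1)] by blast
  obtain M3 where M3: "\<And>N. N \<ge> M3 \<Longrightarrow> \<forall>y. cent y \<and> e2 \<le> nrm (\<lambda>m. y m - R0 m) \<and> nrm (\<lambda>m. y m - R0 m) \<le> 2
            \<longrightarrow> Fw G (wn N) R0 + \<delta>n \<le> Fw G (wn N) y"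
    using evn ev_seq_obtain by blast
  obtain \<delta>t where dt: "\<delta>t > 0" and evt: "eventually (\<lambda>N. \<forall>y. cent y \<and> e2 \<le> nrm (\<lambda>m. y m - T0 m) \<and> nrm (\<lambda>m. y m - T0 m) \<le> 2
            \<longrightarrow> Fw G (wt N) T0 + \<delta>t \<le> Fw G (wt N) y) sequentially"
    using fit.S1gap[OF Ft e2(1)] by blast
  obtain M4 where M4: "\<And>N. N \<ge> M4 \<Longrightarrow> \<forall>y. cent y \<and> e2 \<le> nrm (\<lambda>m. y m - T0 m) \<and> nrm (\<lambda>m. y m - T0 m) \<le> 2
            \<longrightarrow> Fw G (wt N) T0 + \<delta>t \<le> Fw G (wt N) y"
    using evt ev_seq_obtain by blast
  define C where "C = (nrm R0 + 1)\<^sup>2 / (2 * sn^2) + (nrm R0 + nrm T0 + 2)\<^sup>2 / (2 * s1^2)"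
  obtain M5 :: nat where M5: "C / \<delta>n < real M5" using reals_Archimedean2 by blast
  obtain M6 :: nat where M6: "C / \<delta>t < real M6" using reals_Archimedean2 by blast
  define M where "M = max M1 (max M2 (max M3 (max M4 (max M5 M6))))"
  show ?thesis
    unfolding eventually_prod_sequentially
  proof (intro exI[of _ M] allI impI, unfold case_prod_conv, intro allI impI)
    fix N n Rp Bp assume N: "N \<ge> M" and n: "n \<ge> M"
      and mn: "is_minimizer (poly_obj sn s1 (LNk N) (LTk n)) (Rp, Bp)"
    define fN where "fN = Fw G (wn N)"
    define ft where "ft = Fw G (wt n)"
    define \<Phi> where "\<Phi> = poly_obj sn s1 (LNk N) (LTk n)"
    have \<Phi>eq: "\<Phi> (R, B) = real N * fN R + real n * ft (\<lambda>m. R m + B m) + qpri sn s1 R B" for R B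
      unfolding \<Phi>_def poly_obj_eq LNk LTk fN_def ft_def ..
    from M1[of N] N obtain u0 where "is_minimizer fN u0" unfolding M_def fN_def by auto
    define u where "u = cen u0"
    have u: "is_minimizer fN u" "cent u" "nrm (\<lambda>m. u m - R0 m) < e2"
      using \<open>is_minimizer fN u0\<close> M1[of N] N unfolding u_def M_def fN_def is_minimizer_def
      by (auto simp: Fw_cen cent_cen)
    from M2[of n] n obtain v0 where "is_minimizer ft v0" unfolding M_def ft_def by auto
    define v where "v = cen v0"
    have v: "is_minimizer ft v" "cent v" "nrm (\<lambda>m. v m - T0 m) < e2"
      using \<open>is_minimizer ft v0\<close> M2[of n] n unfolding v_def M_def ft_def is_minimizer_def
      by (auto simp: Fw_cen cent_cen)
    have gN: "\<And>y. cent y \<and> e2 \<le> nrm (\<lambda>m. y m - R0 m) \<and> nrm (\<lambda>m. y m - R0 m) \<le> 2 \<Longrightarrow> fN R0 + \<delta>n \<le> fN y"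
      using M3[of N] N unfolding M_def fN_def by auto
    have gt: "\<And>y. cent y \<and> e2 \<le> nrm (\<lambda>m. y m - T0 m) \<and> nrm (\<lambda>m. y m - T0 m) \<le> 2 \<Longrightarrow> ft T0 + \<delta>t \<le> ft y"
      using M4[of n] n unfolding M_def ft_def by auto
    have CN: "C < real N * \<delta>n"
    proof -
      have "C / \<delta>n < real N" using M5 N unfolding M_def by (smt (verit) of_nat_le_iff max.bounded_iff)
      then show ?thesis using dn by (simp add: divide_less_eq mult.commute)
    qed
    have Cn: "C < real n * \<delta>t"
    proof -
      have "C / \<delta>t < real n" using M6 n unfolding M_def by (smt (verit) of_nat_le_iff max.bounded_iff)
      then show ?thesis using dt by (simp add: divide_less_eq mult.commute)
    qed
    define Tp where "Tp = (\<lambda>m. Rp m + Bp m)"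
    have cR: "cent Rp" and cT: "cent Tp" using poly_cent[OF sn s1 mn] unfolding Tp_def by auto
    define D where "D = max (nrm (\<lambda>m. Rp m - u m)) (nrm (\<lambda>m. Tp m - v m))"
    have "D \<le> \<epsilon>"
    proof (rule ccontr)
      assume "\<not> D \<le> \<epsilon>"
      then have De: "\<epsilon> < D" by simp
      define t where "t = \<epsilon> / D"
      have t: "0 < t" "t < 1" using De eps unfolding t_def by auto
      define yR where "yR = seg u Rp t"
      define yB where "yB = seg (\<lambda>m. v m - u m) Bp t"
      have yT: "(\<lambda>m. yR m + yB m) = seg v Tp t"
        unfolding yR_def yB_def seg_add Tp_def by simp
      have valid: "\<And>a b r. (a, b, r) \<in> set (LNk N) \<Longrightarrow> 0 \<le> r \<and> r \<le> 1"
        "\<And>a b r. (a, b, r) \<in> set (LTk n) \<Longrightarrow> 0 \<le> r \<and> r \<le> 1"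
        using LNs LTs vG unfolding validr_def by blast+
      have "\<Phi> (yR, yB) \<le> (1 - t) * \<Phi> (u, \<lambda>m. v m - u m) + t * \<Phi> (Rp, Bp)"
        unfolding \<Phi>_def yR_def yB_def by (rule poly_seg) (use valid t in auto)
      moreover have "\<Phi> (Rp, Bp) \<le> \<Phi> (yR, yB)" using mn unfolding \<Phi>_def is_minimizer_def by blast
      then have "t * \<Phi> (Rp, Bp) \<le> t * \<Phi> (yR, yB)" using t by (simp add: mult_left_mono)
      ultimately have "(1 - t) * \<Phi> (yR, yB) \<le> (1 - t) * \<Phi> (u, \<lambda>m. v m - u m)"
        by (simp add: algebra_simps)
      then have le: "\<Phi> (yR, yB) \<le> \<Phi> (u, \<lambda>m. v m - u m)" using t by simp
      have qc: "qpri sn s1 u (\<lambda>m. v m - u m) \<le> C"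
        unfolding C_def using u(3) v(3) e2 eps unfolding e2_def by (intro qpri_bound) auto
      have Phic: "\<Phi> (u, \<lambda>m. v m - u m) = real N * fN u + real n * ft v + qpri sn s1 u (\<lambda>m. v m - u m)"
        unfolding \<Phi>eq by simp
      have Phiy: "\<Phi> (yR, yB) \<ge> real N * fN yR + real n * ft (seg v Tp t)"
        unfolding \<Phi>eq yT using qpri_nonneg[of sn s1 yR yB] by simp
      have fu: "fN u \<le> fN yR" using u(1) unfolding is_minimizer_def by blast
      have fv: "ft v \<le> ft (seg v Tp t)" using v(1) unfolding is_minimizer_def by blast
      show False
      proof (cases "nrm (\<lambda>m. Tp m - v m) \<le> nrm (\<lambda>m. Rp m - u m)")
        case True
        then have DD: "D = nrm (\<lambda>m. Rp m - u m)" unfolding D_def by simp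
        have dist: "nrm (\<lambda>m. yR m - u m) = \<epsilon>"
          unfolding yR_def using nrm_seg[of t u Rp] t De DD eps unfolding t_def by simp
        have cy: "cent yR" unfolding yR_def using cent_seg u(2) cR by blast
        have "nrm (\<lambda>m. yR m - u m) \<le> nrm (\<lambda>m. yR m - R0 m) + nrm (\<lambda>m. R0 m - u m)" by (rule nrm_tri)
        moreover have "nrm (\<lambda>m. yR m - R0 m) \<le> nrm (\<lambda>m. yR m - u m) + nrm (\<lambda>m. u m - R0 m)" by (rule nrm_tri)
        moreover have "nrm (\<lambda>m. R0 m - u m) = nrm (\<lambda>m. u m - R0 m)" by (rule nrm_commute)
        ultimately have "e2 \<le> nrm (\<lambda>m. yR m - R0 m) \<and> nrm (\<lambda>m. yR m - R0 m) \<le> 2"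
          using dist u(3) eps unfolding e2_def by linarith
        then have "fN R0 + \<delta>n \<le> fN yR" using gN cy by blast
        moreover have "fN u \<le> fN R0" using u(1) unfolding is_minimizer_def by blast
        ultimately have "real N * (fN u + \<delta>n) \<le> real N * fN yR" by (intro mult_left_mono) auto
        then have "real N * fN u + C < real N * fN yR" using CN by (simp add: algebra_simps)
        then show False using le Phic Phiy qc fv mult_left_mono[OF fv, of "real n"] by linarith
      next
        case False
        then have DD: "D = nrm (\<lambda>m. Tp m - v m)" unfolding D_def by simp
        define yT where "yT = seg v Tp t"
        have dist: "nrm (\<lambda>m. yT m - v m) = \<epsilon>"
          unfolding yT_def using nrm_seg[of t v Tp] t De DD eps unfolding t_def by simp
        have cy: "cent yT" unfolding yT_def using cent_seg v(2) cT by blast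
        have "nrm (\<lambda>m. yT m - v m) \<le> nrm (\<lambda>m. yT m - T0 m) + nrm (\<lambda>m. T0 m - v m)" by (rule nrm_tri)
        moreover have "nrm (\<lambda>m. yT m - T0 m) \<le> nrm (\<lambda>m. yT m - v m) + nrm (\<lambda>m. v m - T0 m)" by (rule nrm_tri)
        moreover have "nrm (\<lambda>m. T0 m - v m) = nrm (\<lambda>m. v m - T0 m)" by (rule nrm_commute)
        ultimately have "e2 \<le> nrm (\<lambda>m. yT m - T0 m) \<and> nrm (\<lambda>m. yT m - T0 m) \<le> 2"
          using dist v(3) eps unfolding e2_def by linarith
        then have "ft T0 + \<delta>t \<le> ft yT" using gt cy by blast
        moreover have "ft v \<le> ft T0" using v(1) unfolding is_minimizer_def by blast
        ultimately have "real n * (ft v + \<delta>t) \<le> real n * ft yT" by (intro mult_left_mono) auto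
        then have "real n * ft v + C < real n * ft yT" using Cn by (simp add: algebra_simps)
        then show False using le Phic Phiy qc fu mult_left_mono[OF fu, of "real N"] unfolding yT_def by linarith
      qed
    qed
    have "nrm (\<lambda>m. Rp m - R0 m) \<le> nrm (\<lambda>m. Rp m - u m) + nrm (\<lambda>m. u m - R0 m)" by (rule nrm_tri)
    moreover have "nrm (\<lambda>m. Tp m - T0 m) \<le> nrm (\<lambda>m. Tp m - v m) + nrm (\<lambda>m. v m - T0 m)" by (rule nrm_tri)
    moreover have "nrm (\<lambda>m. Rp m - u m) \<le> D" "nrm (\<lambda>m. Tp m - v m) \<le> D" unfolding D_def by auto
    ultimately show "nrm (\<lambda>m. Rp m - R0 m) < 2 * \<epsilon> \<and> nrm (\<lambda>m. Rp m + Bp m - T0 m) < 2 * \<epsilon>"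
      using \<open>D \<le> \<epsilon>\<close> u(3) v(3) eps unfolding e2_def Tp_def by linarith
  qed
qed



definition freq :: "(bool \<times> nat \<Rightarrow> 'o \<Rightarrow> 'k game) \<Rightarrow> bool \<Rightarrow> 'k game \<Rightarrow> nat \<Rightarrow> 'o \<Rightarrow> real" where
  "freq X b g N \<omega> = (\<Sum>i<N. indicator {g} (X (b, i) \<omega>)) / real N"

lemma finite_valid: "finite (valid_games :: ('k::finite) game set)"
proof -
  have "valid_games \<subseteq> (UNIV :: 'k set) \<times> (UNIV :: 'k set) \<times> {0, 1/2, 1::real}"
    unfolding valid_games_def by auto
  moreover have "finite ((UNIV :: 'k set) \<times> (UNIV :: 'k set) \<times> {0, 1/2, 1::real})" by simp
  ultimately show ?thesis by (rule finite_subset)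
qed

lemma validr_valid: "validr valid_games"
  unfolding validr_def valid_games_def by auto

lemma loss_sample:
  assumes G: "finite G" and XG: "\<And>i. X (b, i) \<omega> \<in> G"
  shows "loss (sample X b N \<omega>) R = real N * Fw G (\<lambda>g. freq X b g N \<omega>) R"
proof -
  have "loss (sample X b N \<omega>) R = (\<Sum>i<N. game_loss R (X (b, i) \<omega>))"
    unfolding loss_def sample_def by (simp add: interv_sum_list_conv_sum_set_nat atLeast0LessThan comp_def)
  also have "\<dots> = (\<Sum>i<N. \<Sum>g\<in>G. indicator {g} (X (b, i) \<omega>) * game_loss R g)"
  proof (rule sum.cong[OF refl])
    fix i
    have "(\<Sum>g\<in>G. indicator {g} (X (b, i) \<omega>) * game_loss R g) = (\<Sum>g\<in>G. if X (b, i) \<omega> = g then game_loss R g else 0)"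
      by (intro sum.cong) (auto simp: indicator_def)
    also have "\<dots> = game_loss R (X (b, i) \<omega>)" using G XG[of i] by (simp add: sum.delta)
    finally show "game_loss R (X (b, i) \<omega>) = (\<Sum>g\<in>G. indicator {g} (X (b, i) \<omega>) * game_loss R g)" ..
  qed
  also have "\<dots> = (\<Sum>g\<in>G. (\<Sum>i<N. indicator {g} (X (b, i) \<omega>)) * game_loss R g)"
    by (subst sum.swap) (simp add: sum_distrib_right)
  also have "\<dots> = real N * Fw G (\<lambda>g. freq X b g N \<omega>) R"
    unfolding Fw_def freq_def by (cases "N = 0") (auto simp: sum_distrib_left)
  finally show ?thesis .
qed

lemma exp_loss_Fw:
  assumes G: "finite G" and P: "set_pmf P \<subseteq> G"
  shows "exp_loss P R = Fw G (pmf P) R"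
  unfolding exp_loss_def Fw_def
  by (subst integral_measure_pmf[OF G]) (use P in auto)

context
  fixes M :: "'o measure" and X :: "bool \<times> nat \<Rightarrow> 'o \<Rightarrow> 'k game" and P :: "'k game pmf" and b :: bool
  assumes ps: "prob_space M"
    and ind: "prob_space.indep_vars M (\<lambda>_. count_space UNIV) X UNIV"
    and dis: "\<And>i. distr M (count_space UNIV) (X (b, i)) = measure_pmf P"
begin

interpretation prob_space M by (rule ps)

lemma Xmeas[measurable]: "X j \<in> measurable M (count_space UNIV)"
  using ind unfolding indep_vars_def by blast

lemma AE_supp: "AE \<omega> in M. X (b, i) \<omega> \<in> set_pmf P"
proof -
  have "AE x in distr M (count_space UNIV) (X (b, i)). x \<in> set_pmf P"
    unfolding dis by (rule AE_measure_pmf)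
  then show ?thesis by (subst (asm) AE_distr_iff) auto
qed

lemma exp_ind: "expectation (\<lambda>\<omega>. indicator {g} (X (b, i) \<omega>) :: real) = pmf P g"
proof -
  have "expectation (\<lambda>\<omega>. indicator {g} (X (b, i) \<omega>) :: real)
      = integral\<^sup>L (distr M (count_space UNIV) (X (b, i))) (indicator {g})"
    by (rule integral_distr[symmetric]) auto
  also have "\<dots> = pmf P g" unfolding dis by (simp add: measure_pmf_single)
  finally show ?thesis .
qed

lemma hoeff:
  assumes N: "N > 0" and e: "\<epsilon> \<ge> 0"
  shows "prob {x\<in>space M. real N * \<epsilon> \<le> \<bar>(\<Sum>i<N. indicator {g} (X (b, i) x)) - real N * pmf P g\<bar>}
          \<le> 2 * exp (- 2 * \<epsilon>\<^sup>2) ^ N"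
proof -
  define I where "I = Pair b ` {..<N}"
  define Z where "Z = (\<lambda>j x. indicator {g} (X j x) :: real)"
  have inj: "inj_on (Pair b) {..<N}" by (auto simp: inj_on_def)
  have cI: "card I = N" unfolding I_def using card_image[OF inj] by simp
  have indZ: "indep_vars (\<lambda>_. borel) Z I"
  proof -
    have "indep_vars (\<lambda>_. count_space UNIV) X I" using indep_vars_subset[OF ind] by simp
    then have "indep_vars (\<lambda>_. borel) (\<lambda>i x. (indicator {g} :: _ \<Rightarrow> real) (X i x)) I"
      by (rule indep_vars_compose2) (rule borel_measurable_count_space)
    then show ?thesis unfolding Z_def .
  qed
  interpret H: Hoeffding_ineq M I Z "\<lambda>_. 0" "\<lambda>_. 1" "\<Sum>i\<in>I. expectation (Z i)"
  proof unfold_locales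
    show "finite I" unfolding I_def by simp
    show "indep_vars (\<lambda>_. borel) Z I" by (rule indZ)
    fix i assume "i \<in> I"
    show "AE x in M. Z i x \<in> {0..1}" by (rule AE_I2) (simp add: Z_def indicator_def)
  qed
  have mu: "(\<Sum>i\<in>I. expectation (Z i)) = real N * pmf P g"
    unfolding I_def using inj by (simp add: sum.reindex Z_def exp_ind)
  have sZ: "(\<Sum>i\<in>I. Z i x) = (\<Sum>i<N. indicator {g} (X (b, i) x))" for x
    unfolding I_def using inj by (simp add: sum.reindex Z_def)
  have pos: "(\<Sum>i\<in>I. (1 - 0)\<^sup>2) > (0::real)" using cI N by simp
  have "prob {x\<in>space M. \<bar>(\<Sum>i\<in>I. Z i x) - (\<Sum>i\<in>I. expectation (Z i))\<bar> \<ge> real N * \<epsilon>}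
        \<le> 2 * exp (-2 * (real N * \<epsilon>)\<^sup>2 / (\<Sum>i\<in>I. (1 - 0)\<^sup>2))"
    using H.Hoeffding_ineq_abs_ge[OF _ pos] e by simp
  also have "-2 * (real N * \<epsilon>)\<^sup>2 / (\<Sum>i\<in>I. (1 - 0)\<^sup>2) = real N * (- 2 * \<epsilon>\<^sup>2)"
    using cI N by (simp add: power2_eq_square)
  also have "exp (real N * (- 2 * \<epsilon>\<^sup>2)) = exp (- 2 * \<epsilon>\<^sup>2) ^ N"
    by (rule exp_of_nat_mult)
  finally show ?thesis unfolding mu sZ by simp
qed

lemma slln_eps:
  assumes e: "\<epsilon> > 0"
  shows "AE x in M. eventually (\<lambda>N. \<bar>freq X b g N x - pmf P g\<bar> < \<epsilon>) sequentially"
proof -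
  define A where "A N = {x\<in>space M. real N * \<epsilon> \<le> \<bar>(\<Sum>i<N. indicator {g} (X (b, i) x)) - real N * pmf P g\<bar>}" for N
  have fm: "(\<lambda>x. \<bar>(\<Sum>i<N. indicator {g} (X (b, i) x) :: real) - real N * pmf P g\<bar>) \<in> borel_measurable M" for N
    by (intro borel_measurable_abs borel_measurable_diff borel_measurable_sum borel_measurable_const
          measurable_compose[OF Xmeas borel_measurable_count_space])
  have Am[measurable]: "A N \<in> sets M" for N unfolding A_def using fm[of N] by measurable
  have bnd: "measure M (A N) \<le> 2 * exp (- 2 * \<epsilon>\<^sup>2) ^ N" for N
  proof (cases "N = 0")
    case True
    have "measure M (A N) \<le> 1" by (rule prob_le_1)
    moreover have "2 * exp (- 2 * \<epsilon>\<^sup>2) ^ N = 2" using True by simp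
    ultimately show ?thesis by linarith
  next
    case False
    then show ?thesis unfolding A_def using hoeff[of N \<epsilon>] e by simp
  qed
  have "summable (\<lambda>N. 2 * exp (- 2 * \<epsilon>\<^sup>2) ^ N)"
    using e by (intro summable_mult summable_geometric) (simp add: power2_eq_square)
  then have sm: "summable (\<lambda>N. measure M (A N))"
    by (rule summable_comparison_test'[where N = 0]) (use bnd in simp)
  have "AE x in M. eventually (\<lambda>N. x \<in> space M - A N) sequentially"
    by (rule borel_cantelli_AE1[OF Am _ sm]) (simp add: less_top[symmetric])
  then show ?thesis
  proof (rule AE_mp, intro AE_I2 impI)
    fix x assume x: "x \<in> space M" and ev: "eventually (\<lambda>N. x \<in> space M - A N) sequentially"
    show "eventually (\<lambda>N. \<bar>freq X b g N x - pmf P g\<bar> < \<epsilon>) sequentially"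
      using eventually_conj[OF ev eventually_gt_at_top[of 0]]
    proof (rule eventually_mono)
      fix N assume "x \<in> space M - A N \<and> 0 < N"
      then have a: "\<bar>(\<Sum>i<N. indicator {g} (X (b, i) x)) - real N * pmf P g\<bar> < real N * \<epsilon>" and N: "N > 0"
        unfolding A_def using x by auto
      have "freq X b g N x - pmf P g = ((\<Sum>i<N. indicator {g} (X (b, i) x)) - real N * pmf P g) / real N"
        unfolding freq_def using N by (simp add: field_simps)
      then show "\<bar>freq X b g N x - pmf P g\<bar> < \<epsilon>" using a N by (simp add: divide_less_eq mult.commute)
    qed
  qed
qed

lemma slln: "AE x in M. (\<lambda>N. freq X b g N x) \<longlonglongrightarrow> pmf P g"
proof -
  have "AE x in M. \<forall>j::nat. eventually (\<lambda>N. \<bar>freq X b g N x - pmf P g\<bar> < 1 / Suc j) sequentially"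
    unfolding AE_all_countable by (intro allI slln_eps) simp
  then show ?thesis
  proof (rule AE_mp, intro AE_I2 impI)
    fix x assume H: "\<forall>j::nat. eventually (\<lambda>N. \<bar>freq X b g N x - pmf P g\<bar> < 1 / Suc j) sequentially"
    show "(\<lambda>N. freq X b g N x) \<longlonglongrightarrow> pmf P g"
    proof (rule tendstoI)
      fix e :: real assume "e > 0"
      then obtain j :: nat where j: "1 / Suc j < e" using nat_approx_posE by blast
      show "eventually (\<lambda>N. dist (freq X b g N x) (pmf P g) < e) sequentially"
        using H[rule_format, of j] by (rule eventually_mono) (use j in \<open>auto simp: dist_real_def\<close>)
    qed
  qed
qed

end



definition mean :: "('k::finite \<Rightarrow> real) \<Rightarrow> real" where
  "mean R = sum R UNIV / real CARD('k)"

lemma cen_mean: "cen R m = R m - mean R"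
  unfolding cen_def mean_def by simp

lemma conv_from_nrm:
  assumes "\<And>\<epsilon>. 0 < \<epsilon> \<Longrightarrow> \<epsilon> \<le> 1 \<Longrightarrow> eventually (\<lambda>x. nrm (\<lambda>m. Rs x m + c x - Rstar m) < \<epsilon>) F"
  shows "conv_upto_const Rs Rstar F"
  unfolding conv_upto_const_def
proof (intro exI[of _ c] allI tendstoI)
  fix m and e :: real assume e: "e > 0"
  have "eventually (\<lambda>x. nrm (\<lambda>m. Rs x m + c x - Rstar m) < min e 1) F"
    using e by (intro assms) auto
  then show "eventually (\<lambda>x. dist (Rs x m + c x) (Rstar m) < e) F"
  proof (rule eventually_mono)
    fix x assume "nrm (\<lambda>m. Rs x m + c x - Rstar m) < min e 1"
    moreover have "\<bar>Rs x m + c x - Rstar m\<bar> \<le> nrm (\<lambda>m. Rs x m + c x - Rstar m)"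
      using nrm_comp[of "\<lambda>m. Rs x m + c x - Rstar m" m] by simp
    ultimately show "dist (Rs x m + c x) (Rstar m) < e" by (simp add: dist_real_def)
  qed
qed

lemma fit_inst:
  fixes P :: "'k::finite game pmf"
  assumes sP: "set_pmf P \<subseteq> valid_games"
    and XG: "\<And>i. X (b, i) \<omega> \<in> valid_games"
    and cv: "\<forall>g\<in>valid_games. (\<lambda>N. freq X b g N \<omega>) \<longlonglongrightarrow> pmf P g"
    and mn: "is_minimizer (exp_loss P) Rs"
    and un: "\<And>R. is_minimizer (exp_loss P) R \<Longrightarrow> \<exists>c. \<forall>m. R m = Rs m + c"
  shows "fit valid_games (\<lambda>N g. freq X b g N \<omega>) (pmf P) (cen Rs)"
proof -
  have el: "exp_loss P = Fw valid_games (pmf P)"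
    using exp_loss_Fw[OF finite_valid sP] by auto
  show ?thesis
  proof unfold_locales
    show "finite (valid_games :: 'k game set)" by (rule finite_valid)
    show "validr (valid_games :: 'k game set)" by (rule validr_valid)
    fix N g show "0 \<le> freq X b g N \<omega>" unfolding freq_def by (intro divide_nonneg_nonneg sum_nonneg) auto
  next
    fix g :: "'k game" assume "g \<in> valid_games"
    then show "(\<lambda>N. freq X b g N \<omega>) \<longlonglongrightarrow> pmf P g" using cv by blast
  next
    fix g show "0 \<le> pmf P g" by simp
  next
    fix R show "Fw valid_games (pmf P) (cen Rs) \<le> Fw valid_games (pmf P) R"
      using mn unfolding el is_minimizer_def Fw_cen by blast
  next
    show "cent (cen Rs)" by (rule cent_cen)
  next
    fix R assume "\<forall>S. Fw valid_games (pmf P) R \<le> Fw valid_games (pmf P) S"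
    then have "is_minimizer (exp_loss P) R" unfolding el is_minimizer_def by blast
    then obtain c where "\<forall>m. R m = Rs m + c" using un by blast
    then show "\<exists>c. \<forall>m. R m = cen Rs m + c"
      by (intro exI[of _ "c + mean Rs"]) (simp add: cen_mean)
  qed
qed

lemma single_conv:
  fixes P :: "'k::finite game pmf"
  assumes F: "fit valid_games (\<lambda>N g. freq X b g N \<omega>) (pmf P) (cen Rs)"
    and XG: "\<And>i. X (b, i) \<omega> \<in> valid_games"
    and hR: "\<And>n. (\<exists>R. is_minimizer (loss (sample X b n \<omega>)) R)
                 \<Longrightarrow> is_minimizer (loss (sample X b n \<omega>)) (Rr n)"
  shows "conv_upto_const Rr Rs sequentially"
proof (rule conv_from_nrm[where c = "\<lambda>x. mean Rs - mean (Rr x)"])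
  fix \<epsilon> :: real assume e: "0 < \<epsilon>" "\<epsilon> \<le> 1"
  define f where "f N = Fw valid_games (\<lambda>g. freq X b g N \<omega>)" for N
  have lossf: "loss (sample X b N \<omega>) = (\<lambda>R. real N * f N R)" for N
    unfolding f_def using loss_sample[of valid_games X b \<omega>, OF finite_valid XG] by auto
  have ev: "eventually (\<lambda>N. ((\<exists>R. is_minimizer (f N) R) \<and>
      (\<forall>R. is_minimizer (f N) R \<longrightarrow> nrm (\<lambda>m. cen R m - cen Rs m) < \<epsilon>)) \<and> 0 < N) sequentially"
    unfolding f_def using e by (intro eventually_conj fit.S1[OF F] eventually_gt_at_top) auto
  then show "eventually (\<lambda>x. nrm (\<lambda>m. Rr x m + (mean Rs - mean (Rr x)) - Rs m) < \<epsilon>) sequentially"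
  proof (rule eventually_mono)
    fix N assume H: "((\<exists>R. is_minimizer (f N) R) \<and>
      (\<forall>R. is_minimizer (f N) R \<longrightarrow> nrm (\<lambda>m. cen R m - cen Rs m) < \<epsilon>)) \<and> 0 < N"
    then obtain R where R: "is_minimizer (f N) R" by blast
    have "is_minimizer (loss (sample X b N \<omega>)) R"
      using R unfolding lossf is_minimizer_def by (auto intro: mult_left_mono)
    then have "is_minimizer (loss (sample X b N \<omega>)) (Rr N)" using hR by blast
    then have "is_minimizer (f N) (Rr N)" using H unfolding lossf is_minimizer_def by auto
    then have "nrm (\<lambda>m. cen (Rr N) m - cen Rs m) < \<epsilon>" using H by blast
    moreover have "(\<lambda>m. cen (Rr N) m - cen Rs m) = (\<lambda>m. Rr N m + (mean Rs - mean (Rr N)) - Rs m)"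
      by (auto simp: cen_mean)
    ultimately show "nrm (\<lambda>m. Rr N m + (mean Rs - mean (Rr N)) - Rs m) < \<epsilon>" by simp
  qed
qed


lemma set_sample: "(\<And>i. X (b, i) \<omega> \<in> G) \<Longrightarrow> set (sample X b N \<omega>) \<subseteq> G"
  unfolding sample_def by auto

lemma poly_conv:
  fixes X :: "bool \<times> nat \<Rightarrow> 'o \<Rightarrow> ('k::finite) game"
  assumes FN: "fit valid_games (\<lambda>N g. freq X False g N \<omega>) (pmf Pn) (cen Rsn)"
    and FT: "fit valid_games (\<lambda>N g. freq X True g N \<omega>) (pmf Pt) (cen Rst)"
    and sn: "sn > 0" and s1: "s1 > 0"
    and XT: "\<And>i. X (True, i) \<omega> \<in> valid_games" and XF: "\<And>i. X (False, i) \<omega> \<in> valid_games"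
    and hRp: "\<And>n N. is_minimizer (poly_obj sn s1 (sample X False N \<omega>) (sample X True n \<omega>)) (Rpp (n, N), Bpp (n, N))"
  shows "conv_upto_const (\<lambda>p m. Rpp p m + Bpp p m) Rst (sequentially \<times>\<^sub>F sequentially)
       \<and> conv_upto_const Rpp Rsn (sequentially \<times>\<^sub>F sequentially)"
proof -
  have ev: "eventually (\<lambda>(n, N). \<forall>Rp Bp. is_minimizer (poly_obj sn s1 (sample X False N \<omega>) (sample X True n \<omega>)) (Rp, Bp) \<longrightarrow>
        nrm (\<lambda>m. Rp m - cen Rsn m) < 2 * (\<epsilon> / 2) \<and> nrm (\<lambda>m. Rp m + Bp m - cen Rst m) < 2 * (\<epsilon> / 2)) (sequentially \<times>\<^sub>F sequentially)"
    if e: "0 < \<epsilon>" "\<epsilon> \<le> 1" for \<epsilon> :: real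
  proof (rule S2[OF FN FT sn s1])
    show "loss (sample X False N \<omega>) R = real N * Fw valid_games (\<lambda>g. freq X False g N \<omega>) R" for N R
      by (rule loss_sample[of valid_games X False \<omega>, OF finite_valid XF])
    show "loss (sample X True N \<omega>) R = real N * Fw valid_games (\<lambda>g. freq X True g N \<omega>) R" for N R
      by (rule loss_sample[of valid_games X True \<omega>, OF finite_valid XT])
    show "set (sample X False N \<omega>) \<subseteq> valid_games" for N by (rule set_sample[of X False \<omega>, OF XF])
    show "set (sample X True N \<omega>) \<subseteq> valid_games" for N by (rule set_sample[of X True \<omega>, OF XT])
  qed (use e in auto)
  have ev2: "eventually (\<lambda>x. nrm (\<lambda>m. Rpp x m - cen Rsn m) < \<epsilon> \<and> nrm (\<lambda>m. Rpp x m + Bpp x m - cen Rst m) < \<epsilon>)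
     (sequentially \<times>\<^sub>F sequentially)" if e: "0 < \<epsilon>" "\<epsilon> \<le> 1" for \<epsilon> :: real
    using ev[OF e]
  proof (rule eventually_mono)
    fix x :: "nat \<times> nat"
    obtain n N where x: "x = (n, N)" by (cases x)
    assume that: "case x of (n, N) \<Rightarrow> \<forall>Rp Bp. is_minimizer (poly_obj sn s1 (sample X False N \<omega>) (sample X True n \<omega>)) (Rp, Bp) \<longrightarrow>
        nrm (\<lambda>m. Rp m - cen Rsn m) < 2 * (\<epsilon> / 2) \<and> nrm (\<lambda>m. Rp m + Bp m - cen Rst m) < 2 * (\<epsilon> / 2)"
    then show "nrm (\<lambda>m. Rpp x m - cen Rsn m) < \<epsilon> \<and> nrm (\<lambda>m. Rpp x m + Bpp x m - cen Rst m) < \<epsilon>"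
    proof -
      have "is_minimizer (poly_obj sn s1 (sample X False N \<omega>) (sample X True n \<omega>)) (Rpp (n, N), Bpp (n, N))"
        by (rule hRp)
      then show ?thesis using that unfolding x by auto
    qed
  qed
  show ?thesis
  proof
    show "conv_upto_const (\<lambda>p m. Rpp p m + Bpp p m) Rst (sequentially \<times>\<^sub>F sequentially)"
    proof (rule conv_from_nrm[where c = "\<lambda>x. mean Rst"])
      fix \<epsilon> :: real assume e: "0 < \<epsilon>" "\<epsilon> \<le> 1"
      show "eventually (\<lambda>x. nrm (\<lambda>m. Rpp x m + Bpp x m + mean Rst - Rst m) < \<epsilon>) (sequentially \<times>\<^sub>F sequentially)"
        using ev2[OF e] by (rule eventually_mono) (simp add: cen_mean algebra_simps)
    qed
    show "conv_upto_const Rpp Rsn (sequentially \<times>\<^sub>F sequentially)"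
    proof (rule conv_from_nrm[where c = "\<lambda>x. mean Rsn"])
      fix \<epsilon> :: real assume e: "0 < \<epsilon>" "\<epsilon> \<le> 1"
      show "eventually (\<lambda>x. nrm (\<lambda>m. Rpp x m + mean Rsn - Rsn m) < \<epsilon>) (sequentially \<times>\<^sub>F sequentially)"
        using ev2[OF e] by (rule eventually_mono) (simp add: cen_mean algebra_simps)
    qed
  qed
qed



theorem mainTheorem3:
  fixes M :: "'o measure"
    and X :: "bool \<times> nat \<Rightarrow> 'o \<Rightarrow> ('k::finite) game"
    and Pt Pn :: "'k game pmf"
    and sn s1 :: real
    and Rt Rn :: "'o \<Rightarrow> nat \<Rightarrow> 'k \<Rightarrow> real"
    and Rp Bp :: "'o \<Rightarrow> nat \<times> nat \<Rightarrow> 'k \<Rightarrow> real"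
    and Rst Rsn :: "'k \<Rightarrow> real"
  assumes "prob_space M"
    and "set_pmf Pt \<subseteq> valid_games" and "set_pmf Pn \<subseteq> valid_games"
    and "prob_space.indep_vars M (\<lambda>_. count_space UNIV) X UNIV"
    and "\<And>i. distr M (count_space UNIV) (X (True, i)) = measure_pmf Pt"
    and "\<And>i. distr M (count_space UNIV) (X (False, i)) = measure_pmf Pn"
    and "sn > 0" and "s1 > 0"
    and "\<And>\<omega> n. (\<exists>R. is_minimizer (loss (sample X True n \<omega>)) R)
                 \<Longrightarrow> is_minimizer (loss (sample X True n \<omega>)) (Rt \<omega> n)"
    and "\<And>\<omega> N. (\<exists>R. is_minimizer (loss (sample X False N \<omega>)) R)
                 \<Longrightarrow> is_minimizer (loss (sample X False N \<omega>)) (Rn \<omega> N)"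
    and "\<And>\<omega> n N. is_minimizer (poly_obj sn s1 (sample X False N \<omega>) (sample X True n \<omega>))
                    (Rp \<omega> (n, N), Bp \<omega> (n, N))"
    and "is_minimizer (exp_loss Pt) Rst"
    and "\<And>R. is_minimizer (exp_loss Pt) R \<Longrightarrow> \<exists>c. \<forall>m. R m = Rst m + c"
    and "is_minimizer (exp_loss Pn) Rsn"
    and "\<And>R. is_minimizer (exp_loss Pn) R \<Longrightarrow> \<exists>c. \<forall>m. R m = Rsn m + c"
  shows "AE \<omega> in M.
           conv_upto_const (Rt \<omega>) Rst sequentially
         \<and> conv_upto_const (\<lambda>p m. Rp \<omega> p m + Bp \<omega> p m) Rst (sequentially \<times>\<^sub>F sequentially)
         \<and> conv_upto_const (Rn \<omega>) Rsn sequentially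
         \<and> conv_upto_const (Rp \<omega>) Rsn (sequentially \<times>\<^sub>F sequentially)"
proof -
  interpret prob_space M by (rule assms(1))
  have XT: "AE \<omega> in M. \<forall>i. X (True, i) \<omega> \<in> valid_games"
    unfolding AE_all_countable
  proof
    fix i
    show "AE \<omega> in M. X (True, i) \<omega> \<in> valid_games"
      using AE_supp[OF assms(1) assms(4) assms(5), of i] by (rule eventually_mono) (use assms(2) in auto)
  qed
  have XF: "AE \<omega> in M. \<forall>i. X (False, i) \<omega> \<in> valid_games"
    unfolding AE_all_countable
  proof
    fix i
    show "AE \<omega> in M. X (False, i) \<omega> \<in> valid_games"
      using AE_supp[OF assms(1) assms(4) assms(6), of i] by (rule eventually_mono) (use assms(3) in auto)
  qed
  have cT: "AE \<omega> in M. \<forall>g\<in>valid_games. (\<lambda>N. freq X True g N \<omega>) \<longlonglongrightarrow> pmf Pt g"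
    by (rule AE_finite_allI[OF finite_valid]) (rule slln[OF assms(1) assms(4) assms(5)])
  have cF: "AE \<omega> in M. \<forall>g\<in>valid_games. (\<lambda>N. freq X False g N \<omega>) \<longlonglongrightarrow> pmf Pn g"
    by (rule AE_finite_allI[OF finite_valid]) (rule slln[OF assms(1) assms(4) assms(6)])
  have all: "AE \<omega> in M. (\<forall>i. X (True, i) \<omega> \<in> valid_games) \<and> (\<forall>i. X (False, i) \<omega> \<in> valid_games)
      \<and> (\<forall>g\<in>valid_games. (\<lambda>N. freq X True g N \<omega>) \<longlonglongrightarrow> pmf Pt g)
      \<and> (\<forall>g\<in>valid_games. (\<lambda>N. freq X False g N \<omega>) \<longlonglongrightarrow> pmf Pn g)"
    using XT XF cT cF by (intro eventually_conj)
  show ?thesis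
    using all
  proof (rule eventually_mono)
    fix \<omega> assume H: "(\<forall>i. X (True, i) \<omega> \<in> valid_games) \<and> (\<forall>i. X (False, i) \<omega> \<in> valid_games)
      \<and> (\<forall>g\<in>valid_games. (\<lambda>N. freq X True g N \<omega>) \<longlonglongrightarrow> pmf Pt g)
      \<and> (\<forall>g\<in>valid_games. (\<lambda>N. freq X False g N \<omega>) \<longlonglongrightarrow> pmf Pn g)"
    have HT: "\<And>i. X (True, i) \<omega> \<in> valid_games" and HF: "\<And>i. X (False, i) \<omega> \<in> valid_games"
      using H by auto
    have FT: "fit valid_games (\<lambda>N g. freq X True g N \<omega>) (pmf Pt) (cen Rst)"
      by (rule fit_inst[where P=Pt and X=X and b=True and \<omega>=\<omega> and Rs=Rst, OF assms(2) HT _ assms(12) assms(13)]) (use H in auto)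
    have FN: "fit valid_games (\<lambda>N g. freq X False g N \<omega>) (pmf Pn) (cen Rsn)"
      by (rule fit_inst[where P=Pn and X=X and b=False and \<omega>=\<omega> and Rs=Rsn, OF assms(3) HF _ assms(14) assms(15)]) (use H in auto)
    have c1: "conv_upto_const (Rt \<omega>) Rst sequentially"
      by (rule single_conv[where X=X and b=True and \<omega>=\<omega>, OF FT HT]) (rule assms(9))
    have c3: "conv_upto_const (Rn \<omega>) Rsn sequentially"
      by (rule single_conv[where X=X and b=False and \<omega>=\<omega>, OF FN HF]) (rule assms(10))
    have c24: "conv_upto_const (\<lambda>p m. Rp \<omega> p m + Bp \<omega> p m) Rst (sequentially \<times>\<^sub>F sequentially)
       \<and> conv_upto_const (Rp \<omega>) Rsn (sequentially \<times>\<^sub>F sequentially)"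
      by (rule poly_conv[where X=X and \<omega>=\<omega>, OF FN FT assms(7) assms(8) HT HF]) (rule assms(11))
    show "conv_upto_const (Rt \<omega>) Rst sequentially
         \<and> conv_upto_const (\<lambda>p m. Rp \<omega> p m + Bp \<omega> p m) Rst (sequentially \<times>\<^sub>F sequentially)
         \<and> conv_upto_const (Rn \<omega>) Rsn sequentially
         \<and> conv_upto_const (Rp \<omega>) Rsn (sequentially \<times>\<^sub>F sequentially)"
      using c1 c3 c24 by blast
  qed
qed

end
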